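(* Let $\Sigma$ be a finite alphabet. For every unranked ordered $\Sigma$-labeled tree $t$ with $|t|\ge 2$, we have $|\mathrm{dag}(t)| \le \frac12 |\mathrm{hdag}(t)|^2$.
   Context: An unranked tree over $\Sigma$ is a finite rooted tree with nodes labeled in $\Sigma$ and linearly ordered children (arbitrary finite number); $|t|$ is its number of edges. $\mathrm{dag}(t)$ is the minimal dag of $t$: its nodes are the distinct subtrees of $t$, and the node of a subtree $f(s_1,\dots,s_k)$ has $k$ ordered edges to the nodes of $s_1,\dots,s_k$; $|\mathrm{dag}(t)|$ is its number of edges. The first-child/next-sibling encoding $\mathrm{fcns}$ maps a sequence of unranked trees to a binary tree (optional left and right child at each node): $\mathrm{fcns}(\varepsilon)$ is empty and $\mathrm{fcns}(t_1\cdots t_n)=f(\mathrm{fcns}(u_1\cdots u_m),\mathrm{fcns}(t_2\cdots t_n))$ when $t_1=f(u_1,\dots,u_m)$. Hybrid dag: for each distinct subtree $s=f(s_1,\dots,s_k)$ of $t$ with $k\ge1$ introduce a fresh symbol $A_s$ and the height-one tree $\rho_s=f(\alpha_1,\dots,\alpha_k)$, where $\alpha_i$ is the label of $s_i$ if $s_i$ is a single node and $\alpha_i=A_{s_i}$ otherwise. Let $\rho'_s$ be $\rho_s$ with its root additionally marked by $A_s$. $\mathrm{hdag}(t)$ is the minimal dag of the forest of binary trees $\mathrm{fcns}(\rho'_s)$ (identical subtrees anywhere in the forest merged), and $|\mathrm{hdag}(t)|$ is its number of edges, not counting edges to absent children. *)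

theory Defs
  imports Main "HOL.Real"
begin

datatype 'a utree = Node 'a "'a utree list"

fun root :: "'a utree \<Rightarrow> 'a" where
  "root (Node a ts) = a"

fun children :: "'a utree \<Rightarrow> 'a utree list" where
  "children (Node a ts) = ts"

fun nnodes :: "'a utree \<Rightarrow> nat" where
  "nnodes (Node a ts) = 1 + sum_list (map nnodes ts)"

definition tsize :: "'a utree \<Rightarrow> nat" where
  "tsize t = nnodes t - 1"

fun subtrees :: "'a utree \<Rightarrow> 'a utree set" where
  "subtrees (Node a ts) = insert (Node a ts) (\<Union> (set (map subtrees ts)))"

text \<open>Number of edges of the minimal dag: each distinct subtree f(s1..sk) contributes k edges.\<close>
definition dag_size :: "'a utree \<Rightarrow> nat" where
  "dag_size t = (\<Sum>s\<in>subtrees t. length (children s))"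

datatype 'b btree = BEmpty | BNode 'b "'b btree" "'b btree"

fun fcns :: "'b utree list \<Rightarrow> 'b btree" where
  "fcns [] = BEmpty"
| "fcns (Node f us # ts) = BNode f (fcns us) (fcns ts)"

fun bsubtrees :: "'b btree \<Rightarrow> 'b btree set" where
  "bsubtrees BEmpty = {}"
| "bsubtrees (BNode x l r) = insert (BNode x l r) (bsubtrees l \<union> bsubtrees r)"

fun bout :: "'b btree \<Rightarrow> nat" where
  "bout BEmpty = 0"
| "bout (BNode x l r) = (if l = BEmpty then 0 else 1) + (if r = BEmpty then 0 else 1)"

definition forest_dag_size :: "'b btree set \<Rightarrow> nat" where
  "forest_dag_size F = (\<Sum>s\<in>\<Union> (bsubtrees ` F). bout s)"

text \<open>Labels of the hybrid trees: original symbols, fresh nonterminals A_s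
  (represented by the subtree s itself), and a root symbol f marked by A_s.\<close>
datatype 'a hlab = Sym 'a | Nt "'a utree" | Marked 'a "'a utree"

definition alpha :: "'a utree \<Rightarrow> 'a hlab" where
  "alpha s = (if children s = [] then Sym (root s) else Nt s)"

definition rho' :: "'a utree \<Rightarrow> 'a hlab utree" where
  "rho' s = Node (Marked (root s) s) (map (\<lambda>si. Node (alpha si) []) (children s))"

definition hdag_size :: "'a utree \<Rightarrow> nat" where
  "hdag_size t = forest_dag_size {fcns [rho' s] | s. s \<in> subtrees t \<and> children s \<noteq> []}"

end

theory Submission
  imports Defs
begin

lemma finite_subtrees: "finite (subtrees t)"
  by (induction t) auto

lemma fcns_ne: "ts \<noteq> [] \<Longrightarrow> fcns ts \<noteq> BEmpty"
  by (cases ts) (auto elim: fcns.elims)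

lemma fcns_drop_mem: "i < length ts \<Longrightarrow> fcns (drop i ts) \<in> bsubtrees (fcns ts)"
proof (induction ts arbitrary: i)
  case Nil then show ?case by simp
next
  case (Cons x ts)
  obtain f us where x: "x = Node f us" by (cases x)
  show ?case
  proof (cases i)
    case 0 then show ?thesis using x by simp
  next
    case (Suc j) then show ?thesis using Cons x by simp
  qed
qed

fun rlen :: "'b btree \<Rightarrow> nat" where
  "rlen BEmpty = 0" | "rlen (BNode _ _ r) = Suc (rlen r)"

fun bright :: "'b btree \<Rightarrow> 'b btree" where
  "bright BEmpty = BEmpty" | "bright (BNode _ _ r) = r"

lemma rlen_fcns: "rlen (fcns ts) = length ts"
proof (induction ts)
  case Nil then show ?case by simp
next
  case (Cons x ts) then show ?case by (cases x) simp
qed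

lemma fcns_cons: "fcns (x # ts) = BNode (root x) (fcns (children x)) (fcns ts)"
  by (cases x) simp

lemma fcns_rho: "fcns [rho' s] = BNode (Marked (root s) s)
   (fcns (map (\<lambda>si. Node (alpha si) []) (children s))) BEmpty"
  by (simp add: rho'_def)

lemma key:
  fixes t :: "'a utree"
  defines "I \<equiv> {s \<in> subtrees t. children s \<noteq> []}"
  assumes s0: "s0 \<in> I"
  shows "card I + length (children s0) - 1 \<le> hdag_size t"
proof -
  define F where "F = {fcns [rho' s] |s. s \<in> subtrees t \<and> children s \<noteq> []}"
  have FI: "F = (\<lambda>s. fcns [rho' s]) ` I" unfolding F_def I_def by auto
  have finI: "finite I" unfolding I_def using finite_subtrees[of t] by simp
  have finb: "finite (bsubtrees b)" for b :: "'a hlab btree" by (induction b) auto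
  define U where "U = \<Union> (bsubtrees ` F)"
  have finU: "finite U" unfolding U_def FI using finI finb by auto
  define L where "L = map (\<lambda>si. Node (alpha si) []) (children s0)"
  define k where "k = length (children s0)"
  have lenL: "length L = k" unfolding L_def k_def by simp
  define R where "R = (\<lambda>s. fcns [rho' s]) ` I"
  define C where "C = (\<lambda>i. fcns (drop i L)) ` {0..<k-1}"
  have RU: "R \<subseteq> U" unfolding R_def U_def FI by (auto simp: fcns_rho)
  have CU: "C \<subseteq> U"
  proof
    fix x assume "x \<in> C"
    then obtain i where i: "i < k - 1" "x = fcns (drop i L)" unfolding C_def by auto
    have "x \<in> bsubtrees (fcns L)" using i fcns_drop_mem[of i L] lenL by auto
    moreover have "fcns L \<in> bsubtrees (fcns [rho' s0])" 
    proof -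
      have "L \<noteq> []" using i lenL by auto
      then obtain a l r where "fcns L = BNode a l r" using fcns_ne by (cases "fcns L") auto
      then show ?thesis by (simp add: fcns_rho L_def[symmetric])
    qed
    moreover have "bsubtrees (fcns L) \<subseteq> bsubtrees (fcns [rho' s0])"
      by (auto simp: fcns_rho L_def[symmetric])
    ultimately show "x \<in> U" unfolding U_def FI using s0 by auto
  qed
  have injR: "inj_on (\<lambda>s. fcns [rho' s]) I" by (rule inj_onI) (simp add: fcns_rho)
  have injC: "inj_on (\<lambda>i. fcns (drop i L)) {0..<k-1}"
  proof (rule inj_onI)
    fix i j assume "i \<in> {0..<k-1}" "j \<in> {0..<k-1}" "fcns (drop i L) = fcns (drop j L)"
    then have "rlen (fcns (drop i L)) = rlen (fcns (drop j L))" by simp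
    then show "i = j" using \<open>i \<in> _\<close> \<open>j \<in> _\<close> lenL by (simp add: rlen_fcns)
  qed
  have Cright: "x \<in> C \<Longrightarrow> bright x \<noteq> BEmpty \<and> bout x \<ge> 1" for x
  proof -
    assume "x \<in> C"
    then obtain i where i: "i < k - 1" "x = fcns (drop i L)" unfolding C_def by auto
    have "drop i L = L ! i # drop (Suc i) L" using i lenL by (simp add: Cons_nth_drop_Suc)
    moreover have "drop (Suc i) L \<noteq> []" using i lenL by simp
    ultimately show ?thesis using i by (simp add: fcns_cons fcns_ne)
  qed
  have disj: "R \<inter> C = {}"
  proof -
    have "x \<in> R \<Longrightarrow> bright x = BEmpty" for x unfolding R_def by (auto simp: fcns_rho)
    then show ?thesis using Cright by blast
  qed
  have Rb: "x \<in> R \<Longrightarrow> bout x \<ge> 1" for x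
    unfolding R_def I_def by (auto simp: fcns_rho fcns_ne)
  have cardA: "card (R \<union> C) = card I + (k - 1)"
    using disj finI card_Un_disjoint[of R C] card_image[OF injR] card_image[OF injC]
    unfolding R_def C_def by simp
  have "card (R \<union> C) = (\<Sum>x\<in>R \<union> C. (1::nat))" by simp
  also have "\<dots> \<le> (\<Sum>x\<in>R \<union> C. bout x)"
    by (rule sum_mono) (use Rb Cright in auto)
  also have "\<dots> \<le> (\<Sum>x\<in>U. bout x)"
    by (rule sum_mono2) (use finU RU CU in auto)
  also have "\<dots> = hdag_size t" unfolding hdag_size_def forest_dag_size_def U_def F_def by simp
  finally show ?thesis using cardA k_def by simp
qed

theorem theorem2:
  fixes t :: "('a :: finite) utree"
  assumes "tsize t \<ge> 2"
  shows "real (dag_size t) \<le> (1/2) * (real (hdag_size t))^2"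
proof -
  define I where "I = {s \<in> subtrees t. children s \<noteq> []}"
  define n where "n = card I"
  define h where "h = hdag_size t"
  have finI: "finite I" unfolding I_def using finite_subtrees[of t] by simp
  have dag: "dag_size t = (\<Sum>s\<in>I. length (children s))"
    unfolding dag_size_def I_def
    by (rule sum.mono_neutral_right) (use finite_subtrees in auto)
  have kb: "s \<in> I \<Longrightarrow> length (children s) \<le> h - n + 1" and hn: "s \<in> I \<Longrightarrow> n + length (children s) - 1 \<le> h" for s
    using key[of s t] unfolding I_def[symmetric] n_def h_def by auto
  have tmem: "t \<in> subtrees t" by (cases t) simp
  have nz: "I \<noteq> {}"
  proof
    assume "I = {}"
    then have "children t = []" using tmem unfolding I_def by auto
    then show False using assms by (cases t) (simp add: tsize_def)
  qed
  then obtain s where s: "s \<in> I" by auto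
  have hge: "n \<le> h" using hn[OF s] s unfolding I_def by (cases "children s") auto
  have dagb: "dag_size t \<le> n * (h - n + 1)"
  proof -
    have "(\<Sum>s\<in>I. length (children s)) \<le> (\<Sum>s\<in>I. h - n + 1)"
      by (rule sum_mono) (rule kb)
    then show ?thesis unfolding dag n_def by simp
  qed
  have case2: "n \<ge> 2 \<or> h \<ge> 2"
  proof (rule ccontr)
    assume c: "\<not> ?thesis"
    have n1: "n = 1" using c nz finI unfolding n_def using card_gt_0_iff[of I] by linarith
    obtain a ts where t: "t = Node a ts" by (cases t)
    have tI: "t \<in> I" using nz tmem assms t unfolding I_def by (auto simp: tsize_def)
    have "length ts \<le> 1" using hn[OF tI] c n1 t by simp
    moreover have "ts \<noteq> []" using tI t unfolding I_def by simp
    ultimately obtain c0 where ts: "ts = [c0]" by (cases ts) auto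
    obtain b us where c0: "c0 = Node b us" by (cases c0)
    have "us \<noteq> []" using assms t ts c0 by (auto simp: tsize_def)
    then have "c0 \<in> I" using t ts c0 unfolding I_def by auto
    moreover have "c0 \<noteq> t"
    proof
      assume "c0 = t"
      have "nnodes t = 1 + nnodes c0" unfolding t ts by simp
      then show False using \<open>c0 = t\<close> by simp
    qed
    ultimately have "card {t, c0} \<le> n" unfolding n_def using tI finI by (intro card_mono) auto
    then show False using n1 \<open>c0 \<noteq> t\<close> by simp
  qed
  have "2 * (real n * (real h - real n + 1)) \<le> real h ^ 2"
  proof -
    have eq: "real h ^ 2 - 2 * (real n * (real h - real n + 1)) = (real h - real n)^2 + real n * (real n - 2)"
      by (simp add: power2_eq_square algebra_simps)
    have "(real h - real n)^2 + real n * (real n - 2) \<ge> 0"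
    proof (cases "n \<ge> 2")
      case True then show ?thesis by (intro add_nonneg_nonneg) auto
    next
      case False
      then consider "n = 0" | "n = 1" by linarith
      then show ?thesis
      proof cases
        case 1 then show ?thesis by simp
      next
        case 2
        with case2 have "real h - real n \<ge> 1" by auto
        then have "1 \<le> (real h - real n)^2" by (simp add: one_le_power)
        then show ?thesis using 2 by simp
      qed
    qed
    then show ?thesis using eq by linarith
  qed
  moreover have "real (dag_size t) \<le> real n * (real h - real n + 1)"
  proof -
    have "real (dag_size t) \<le> real (n * (h - n + 1))" using dagb by linarith
    also have "\<dots> = real n * (real h - real n + 1)" using hge by (simp only: of_nat_mult of_nat_add of_nat_diff of_nat_1)
    finally show ?thesis .
  qed
  ultimately show ?thesis unfolding h_def by simp
qed

end
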